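(* Let $(d,e;m)\in\mathcal{E}$ with $d\geq e$ be obstructive, i.e. there exists a rational $a\geq1$ with $\mu(d,e;m)(a)>\sqrt{a/2}$. Then either $e=d$ or $e=d-1$.
   Context: Weight expansion: for rational $a=p/q\geq1$ in lowest terms with continued fraction $[l_0;l_1,\dots,l_N]$ ($l_N\geq2$ if $N\geq1$), $w(a)=(1^{\times l_0},x_1^{\times l_1},\dots,x_N^{\times l_N})$ with $x_0=1$, $x_1=a-l_0$, $x_i=x_{i-2}-l_{i-1}x_{i-1}$; here $x^{\times l}$ is $x$ repeated $l$ times. One has $\sum w_i^2=a$. The set $\mathcal{E}$: a Cremona transform of an integer tuple $(\delta;n_1,\dots,n_k)$ with $n_1\geq\dots\geq n_k$ is $(2\delta-n_1-n_2-n_3;\delta-n_2-n_3,\delta-n_1-n_3,\delta-n_1-n_2,n_4,\dots,n_k)$; a Cremona move is a Cremona transform followed by a permutation of the entries after the semicolon. $\mathcal{E}$ consists of $(0,0;-1)$ together with all integer tuples $(d,e;m_1,\dots,m_M)$ with $d,e\geq0$, $m_1\geq\dots\geq m_M\geq0$, satisfying $\sum m_i=2(d+e)-1$, $\sum m_i^2=2de+1$, and such that $(d+e-m_1;d-m_1,e-m_1,m_2,\dots,m_M)$ reduces to $(0;-1,0,\dots,0)$ by repeated Cremona moves. $\mu(d,e;m)(a):=\langle m,w(a)\rangle/(d+e)$, with $\langle\cdot,\cdot\rangle$ the Euclidean scalar product after padding with zeros. *)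

theory Defs
  imports Complex_Main "HOL-Library.Multiset"
begin

text \<open>Euclidean algorithm: the continued fraction coefficients [l_0; l_1, ..., l_N]
  of p/q (p, q > 0). This is the standard expansion, with l_N >= 2 whenever N >= 1.\<close>
function cf_nat :: "nat \<Rightarrow> nat \<Rightarrow> nat list" where
  "cf_nat p q = (if q = 0 then [] else
     (p div q) # (if p mod q = 0 then [] else cf_nat q (p mod q)))"
  by auto
termination by (relation "measure (\<lambda>(p, q). q)") auto

declare cf_nat.simps [simp del]

definition cf_rat :: "rat \<Rightarrow> nat list" where
  "cf_rat a = (case quotient_of a of (p, q) \<Rightarrow> cf_nat (nat p) (nat q))"

fun xpair :: "rat \<Rightarrow> nat list \<Rightarrow> nat \<Rightarrow> rat \<times> rat" where
  "xpair a ls 0 = (1, a - of_nat (ls ! 0))"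
| "xpair a ls (Suc i) = (let (u, v) = xpair a ls i in (v, u - of_nat (ls ! Suc i) * v))"

definition wx :: "rat \<Rightarrow> nat \<Rightarrow> rat" where
  "wx a i = fst (xpair a (cf_rat a) i)"

definition weight_expansion :: "rat \<Rightarrow> rat list" where
  "weight_expansion a =
     (let ls = cf_rat a in concat (map (\<lambda>i. replicate (ls ! i) (wx a i)) [0..<length ls]))"

text \<open>Cremona transform of (\<delta>; n_1, ..., n_k) with n_1 \<ge> ... \<ge> n_k, k \<ge> 3.\<close>
definition cremona_transform :: "int \<Rightarrow> int list \<Rightarrow> int \<times> int list" where
  "cremona_transform \<delta> ns =
     (2*\<delta> - ns!0 - ns!1 - ns!2,
      [\<delta> - ns!1 - ns!2, \<delta> - ns!0 - ns!2, \<delta> - ns!0 - ns!1] @ drop 3 ns)"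

definition cremona_move :: "int \<times> int list \<Rightarrow> int \<times> int list \<Rightarrow> bool" where
  "cremona_move t t' =
     (let \<delta> = fst t;
          ns = rev (sort (snd t @ replicate (3 - length (snd t)) 0));
          (\<delta>', ns') = cremona_transform \<delta> ns
      in fst t' = \<delta>' \<and> mset (snd t') = mset ns')"

text \<open>The tuple (0; -1, 0, ..., 0), up to order of entries and number of zeros.\<close>
definition is_reduced_class :: "int \<times> int list \<Rightarrow> bool" where
  "is_reduced_class t = (fst t = 0 \<and> mset (filter (\<lambda>x. x \<noteq> 0) (snd t)) = {#-1#})"

definition reduces_to_exc :: "int \<times> int list \<Rightarrow> bool" where
  "reduces_to_exc t = (\<exists>t'. cremona_move\<^sup>*\<^sup>* t t' \<and> is_reduced_class t')"

definition E_set :: "(int \<times> int \<times> int list) set" where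
  "E_set = {(0, 0, [-1])} \<union>
    {(d, e, m). d \<ge> 0 \<and> e \<ge> 0 \<and> m \<noteq> [] \<and> sorted (rev m) \<and> (\<forall>x\<in>set m. x \<ge> 0)
       \<and> sum_list m = 2*(d+e) - 1
       \<and> sum_list (map (\<lambda>x. x^2) m) = 2*d*e + 1
       \<and> reduces_to_exc (d + e - hd m, [d - hd m, e - hd m] @ tl m)}"

text \<open>Euclidean scalar product after padding with zeros (zip truncation = zero padding).\<close>
definition mu :: "int \<Rightarrow> int \<Rightarrow> int list \<Rightarrow> rat \<Rightarrow> real" where
  "mu d e m a =
     (\<Sum>(x, y)\<leftarrow>zip m (weight_expansion a). real_of_int x * real_of_rat y) / real_of_int (d + e)"

end

theory Submission
  imports Defs
begin

fun hh :: "rat \<Rightarrow> rat \<Rightarrow> nat list \<Rightarrow> rat" where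
  "hh u v [] = 0"
| "hh u v (l#ls) = of_nat l * v^2 + hh v (u - of_nat l * v) ls"

fun xp :: "rat \<Rightarrow> rat \<Rightarrow> nat list \<Rightarrow> nat \<Rightarrow> rat \<times> rat" where
  "xp u v ls 0 = (v, u - of_nat (ls ! 0) * v)"
| "xp u v ls (Suc i) = (let (s, t) = xp u v ls i in (t, s - of_nat (ls ! Suc i) * t))"

lemma xpair_xp: "xpair a ls i = xp a 1 ls i"
  by (induction i) auto

lemma xp_shift: "xp u v (l#ls) (Suc i) = xp v (u - of_nat l * v) ls i"
  by (induction i) (auto simp: Let_def split: prod.splits)

lemma xp_sum: "(\<Sum>i<length ls. of_nat (ls!i) * (fst (xp u v ls i))^2) = hh u v ls"
proof (induction ls arbitrary: u v)
  case Nil then show ?case by simp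
next
  case (Cons l ls)
  have "(\<Sum>i<length (l#ls). of_nat ((l#ls)!i) * (fst (xp u v (l#ls) i))^2)
     = of_nat l * v^2 + (\<Sum>i<length ls. of_nat (ls!i) * (fst (xp u v (l#ls) (Suc i)))^2)"
    by (simp only: length_Cons sum.lessThan_Suc_shift) (simp del: xp.simps(2) add: xp_shift)
  also have "\<dots> = of_nat l * v^2 + hh v (u - of_nat l * v) ls"
    using Cons.IH by (simp del: xp.simps(2) add: xp_shift)
  finally show ?case by simp
qed

lemma hh_cf: "Q > 0 \<Longrightarrow> hh (of_nat P * c) (of_nat Q * c) (cf_nat P Q) = of_nat P * of_nat Q * c^2"
proof (induction P Q rule: cf_nat.induct)
  case (1 P Q)
  have eq: "(of_nat P :: rat) = of_nat (P div Q) * of_nat Q + of_nat (P mod Q)"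
    by (metis div_mult_mod_eq of_nat_add of_nat_mult)
  have d: "of_nat P * c - of_nat (P div Q) * (of_nat Q * c) = of_nat (P mod Q) * c"
    by (simp add: eq algebra_simps)
  show ?case
  proof (cases "P mod Q = 0")
    case True
    then show ?thesis using 1(2) by (subst cf_nat.simps) (simp add: eq power2_eq_square algebra_simps)
  next
    case False
    have IH: "hh (of_nat Q * c) (of_nat (P mod Q) * c) (cf_nat Q (P mod Q)) = of_nat Q * of_nat (P mod Q) * c^2"
      using 1(1) 1(2) False by auto
    show ?thesis using 1(2) False
      apply (subst cf_nat.simps)
      apply (simp add: d IH)
      apply (simp add: eq power2_eq_square algebra_simps)
      done
  qed
qed

lemma sl_concat: "sum_list (concat xss) = sum_list (map sum_list (xss :: rat list list))"
  by (induction xss) auto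

lemma sl_rep: "sum_list (map (\<lambda>y. y^2) (replicate k (x::rat))) = of_nat k * x^2"
  by (induction k) (auto simp: algebra_simps)

lemma sl_rep2: "sum_list (replicate k (x::rat)) = of_nat k * x"
  by (induction k) (auto simp: algebra_simps)

lemma we_aux: "sum_list (map (\<lambda>y. y^2) (concat (map (\<lambda>i. replicate (ls ! i) (w i :: rat)) [0..<n])))
   = (\<Sum>i<n. of_nat (ls!i) * (w i)^2)"
  by (induction n) (simp_all add: sl_rep sl_rep2)

lemma we_sq: "a \<ge> 1 \<Longrightarrow> sum_list (map (\<lambda>y. y^2) (weight_expansion a)) = a"
proof -
  assume a1: "a \<ge> 1"
  obtain p q where pq: "quotient_of a = (p, q)" by (cases "quotient_of a")
  have qpos: "q > 0" using pq quotient_of_denom_pos by blast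
  have aeq: "a = of_int p / of_int q" using pq quotient_of_div by blast
  have ppos: "p > 0" using a1 qpos aeq
    by (metis divide_nonpos_pos le_numeral_extra(4) linorder_not_le of_int_0_less_iff order_trans zero_less_one)
  define ls where "ls = cf_rat a"
  have ls: "ls = cf_nat (nat p) (nat q)" unfolding ls_def cf_rat_def pq by simp
  have "sum_list (map (\<lambda>y. y^2) (weight_expansion a)) = (\<Sum>i<length ls. of_nat (ls!i) * (wx a i)^2)"
    unfolding weight_expansion_def ls_def Let_def
    by (rule we_aux)
  also have "\<dots> = (\<Sum>i<length ls. of_nat (ls!i) * (fst (xp a 1 ls i))^2)"
    unfolding wx_def ls_def xpair_xp by simp
  also have "\<dots> = hh a 1 ls" by (rule xp_sum)
  also have "\<dots> = hh (of_nat (nat p) * (1 / of_int q)) (of_nat (nat q) * (1 / of_int q)) (cf_nat (nat p) (nat q))"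
    using qpos ppos aeq ls by simp
  also have "\<dots> = of_nat (nat p) * of_nat (nat q) * (1 / of_int q)^2"
    by (rule hh_cf) (use qpos in simp)
  also have "\<dots> = a" using qpos ppos aeq by (simp add: power2_eq_square field_simps)
  finally show ?thesis .
qed

lemma cs_zip:
  fixes f :: "'a \<Rightarrow> real" and g :: "'b \<Rightarrow> real"
  shows "2 * t * (\<Sum>(x, y)\<leftarrow>zip xs ys. f x * g y) \<le> t^2 * (\<Sum>x\<leftarrow>xs. (f x)^2) + (\<Sum>y\<leftarrow>ys. (g y)^2)"
proof (induction xs arbitrary: ys)
  case Nil
  then show ?case by (auto intro!: sum_list_nonneg)
next
  case (Cons x xs)
  show ?case
  proof (cases ys)
    case Nil
    have h: "0 \<le> (\<Sum>x\<leftarrow>xs. (f x)^2)" by (intro sum_list_nonneg) auto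
    have "0 \<le> (\<Sum>x\<leftarrow>x#xs. (f x)^2)" using h by simp
    then have "0 \<le> t^2 * (\<Sum>x\<leftarrow>x#xs. (f x)^2)" by simp
    then show ?thesis using Nil by simp
  next
    case (Cons y ys')
    have "0 \<le> (t * f x - g y)^2" by simp
    then have "2 * t * (f x * g y) \<le> t^2 * (f x)^2 + (g y)^2"
      by (simp add: power2_eq_square algebra_simps)
    then show ?thesis using Cons.IH[of ys'] Cons by (simp add: algebra_simps)
  qed
qed

lemma of_int_sl: "(\<Sum>x\<leftarrow>m. (real_of_int x)^2) = real_of_int (sum_list (map (\<lambda>x. x^2) m))"
  by (induction m) auto

lemma of_rat_sl: "(\<Sum>x\<leftarrow>w. (real_of_rat x)^2) = real_of_rat (sum_list (map (\<lambda>x. x^2) w))"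
  by (induction w) (auto simp: of_rat_add of_rat_power)

theorem lemma4p5:
  fixes d e :: int and m :: "int list"
  assumes "(d, e, m) \<in> E_set"
    and "d \<ge> e"
    and "\<exists>a::rat. a \<ge> 1 \<and> mu d e m a > sqrt (real_of_rat a / 2)"
  shows "e = d \<or> e = d - 1"
proof (cases "d = 0 \<and> e = 0")
  case True then show ?thesis by simp
next
  case False
  have mem: "(d, e, m) \<in> {(d, e, m). d \<ge> 0 \<and> e \<ge> 0 \<and> m \<noteq> [] \<and> sorted (rev m) \<and> (\<forall>x\<in>set m. x \<ge> 0)
       \<and> sum_list m = 2*(d+e) - 1
       \<and> sum_list (map (\<lambda>x. x^2) m) = 2*d*e + 1
       \<and> reduces_to_exc (d + e - hd m, [d - hd m, e - hd m] @ tl m)}"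
    using assms(1) False unfolding E_set_def by blast
  then have dpos: "d \<ge> 0" "e \<ge> 0" and msq: "sum_list (map (\<lambda>x. x^2) m) = 2*d*e + 1"
    by simp_all
  have de: "d + e > 0" using False dpos by auto
  obtain a :: rat where a1: "a \<ge> 1" and mu: "mu d e m a > sqrt (real_of_rat a / 2)" using assms(3) by blast
  define S where "S = (\<Sum>(x, y)\<leftarrow>zip m (weight_expansion a). real_of_int x * real_of_rat y)"
  define A where "A = real_of_int (2*d*e + 1)"
  define ra where "ra = real_of_rat a"
  have ra1: "ra \<ge> 1" using a1 unfolding ra_def by (metis of_rat_1 of_rat_less_eq)
  have Apos: "A > 0" unfolding A_def using dpos by (simp add: mult_nonneg_nonneg add_nonneg_pos)
  have S1: "S / real_of_int (d+e) > sqrt (ra / 2)" using mu unfolding mu_def S_def ra_def .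
  have dr: "real_of_int (d+e) > 0" using de by simp
  have S2: "S > real_of_int (d+e) * sqrt (ra / 2)" using S1 dr by (simp add: field_simps)
  have sq0: "sqrt (ra/2) \<ge> 0" using ra1 by simp
  have "real_of_int (d+e) * sqrt (ra/2) \<ge> 0" using dr sq0 by simp
  then have Spos: "S > 0" using S2 by linarith
  have S3: "S^2 > (real_of_int (d+e))^2 * (ra/2)"
  proof -
    have "(real_of_int (d+e) * sqrt (ra / 2))^2 < S^2"
      using S2 dr sq0 by (intro power_strict_mono) auto
    then show ?thesis using ra1 by (simp add: power_mult_distrib)
  qed
  have cs: "2 * (S/A) * S \<le> (S/A)^2 * A + ra"
    using cs_zip[of "S/A" real_of_int real_of_rat m "weight_expansion a"]
    unfolding S_def[symmetric] of_int_sl of_rat_sl msq we_sq[OF a1] A_def ra_def by simp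
  have "S^2 \<le> A * ra"
  proof -
    have e1: "2 * (S/A) * S = 2 * (S^2 / A)" by (simp add: power2_eq_square)
    have e2: "(S/A)^2 * A = S^2 / A" using Apos by (simp add: power2_eq_square)
    have "S^2 / A \<le> ra" using cs unfolding e1 e2 by linarith
    then show ?thesis using Apos by (simp add: divide_le_eq mult.commute)
  qed
  then have "(real_of_int (d+e))^2 * (ra/2) < A * ra" using S3 by simp
  then have "(real_of_int (d+e))^2 < 2 * A" using ra1 by (simp add: field_simps)
  then have "real_of_int ((d+e)^2) < real_of_int (2*(2*d*e+1))" unfolding A_def by simp
  then have "(d+e)^2 < 2*(2*d*e+1)" by linarith
  then have "(d-e)^2 < 2" by (simp add: power2_eq_square algebra_simps)
  then have "d - e < 2"
  proof (rule contrapos_pp)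
    assume "\<not> d - e < 2"
    then have "(2::int)^2 \<le> (d-e)^2" by (intro power_mono) auto
    then show "\<not> (d-e)^2 < 2" by simp
  qed
  then show ?thesis using assms(2) by auto
qed

end
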